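(* Let $q$, $\phi,\theta$, $U_1$ and $a^*,b^*$ be as in the context, and for $\lambda\in(0,\infty)$ let $\xi(\lambda)=-\frac{b^*}{2a^*}+\frac{i}{a^*}$ and $\psi(x,\lambda)=\theta(x,\lambda)-\xi(\lambda)\phi(x,\lambda)$. Then for every $x_0>0$ and every $\lambda\in(0,\infty)$, \[\lim_{N\to\infty}\frac{\int_{x_0}^N\psi(x,\lambda)^2\,dx}{\int_{x_0}^N|\psi(x,\lambda)|^2\,dx}=0.\]
   Context: $-y''+qy=\lambda y$ on $(0,\infty)$, $q(x)=\frac{q_0}{x^2}+\frac{q_1}{x}+\sum_{n\ge0}q_{n+2}x^n$ with real coefficients, series convergent on $(0,\infty)$, $q_0\ge-\tfrac14$, $q_0,q_1$ not both zero, $q\to0$ at $\infty$, and for some $x_0>0$ either $q\in L_1(x_0,\infty)$ or ($q'\in L_1(x_0,\infty)$, $q\in AC_{loc}[x_0,\infty)$). $\phi,\theta$: with $q_0=\nu^2-\frac14$, $\nu\ge0$, $\phi=x^{1/2+\nu}(1+\sum_{n\ge1}a_n(\lambda)x^n)$ is the Frobenius solution at $0$ for the larger indicial root, $y_2$ a second (possibly logarithmic) Frobenius solution with leading coefficient $1$ and coefficients real polynomials in $\lambda$, $C=W(\phi,y_2)\ne0$ real, $\theta=y_2/C$, so $W(\phi,\theta)=1$. Appell system: $(P,Q,R)'=M(P,Q,R)^T$, $M=\begin{pmatrix}0&\lambda-q&0\\-2&0&2(\lambda-q)\\0&-1&0\end{pmatrix}$; $U_1$ is its unique solution with $\lim_{x\to\infty}U_1=(\sqrt\lambda,0,1/\sqrt\lambda)^T$,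 and $a^*,b^*,c^*$ are the real coefficients with $U_1=a^*((\theta')^2,-2\theta\theta',\theta^2)^T+b^*(\theta'\phi',-(\theta\phi'+\theta'\phi),\theta\phi)^T+c^*((\phi')^2,-2\phi\phi',\phi^2)^T$ (one has $a^*>0$). *)

theory Defs
  imports "HOL-Analysis.Analysis"
begin

text \<open>Frobenius exponent: q0 = nu^2 - 1/4 with nu >= 0.\<close>
definition frob_nu :: "real \<Rightarrow> real" where
  "frob_nu q0 = sqrt (q0 + 1/4)"

definition series_potential :: "real \<Rightarrow> real \<Rightarrow> (nat \<Rightarrow> real) \<Rightarrow> real \<Rightarrow> real" where
  "series_potential q0 q1 qs x = q0 / x\<^sup>2 + q1 / x + (\<Sum>n. qs n * x ^ n)"

end

theory Submission
  imports Defs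
begin


lemma lh_avg:
  fixes F F' :: "real \<Rightarrow> real"
  assumes "eventually (\<lambda>x. DERIV F x :> F' x) at_top" "(F' \<longlongrightarrow> L) at_top"
  shows "((\<lambda>N. F N / N) \<longlongrightarrow> L) at_top"
proof (rule lhospital_at_top_at_top[where g'="\<lambda>_. 1" and f'=F'])
  show "LIM x at_top. x :> at_top" by (rule filterlim_ident)
  show "\<forall>\<^sub>F x in at_top. (1::real) \<noteq> 0" by simp
  show "\<forall>\<^sub>F x in at_top. DERIV F x :> F' x" by fact
  show "\<forall>\<^sub>F x in at_top. ((\<lambda>x. x) has_real_derivative 1) (at x)"
    by (auto intro!: derivative_eq_intros)
  show "((\<lambda>x. F' x / 1) \<longlongrightarrow> L) at_top" using assms(2) by simp
qed

lemma deriv_integral_at: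
  fixes f :: "real \<Rightarrow> real"
  assumes "continuous_on {a..} f" "a < N"
  shows "DERIV (\<lambda>t. integral {a..t} f) N :> f N"
proof -
  have c: "continuous_on {a..N+1} f" using assms(1) by (rule continuous_on_subset) auto
  have "((\<lambda>t. integral {a..t} f) has_real_derivative f N) (at N within {a..N+1})"
    by (rule integral_has_real_derivative[OF c]) (use assms in auto)
  moreover have "at N within {a..N+1} = at N" using assms by (intro at_within_Icc_at) auto
  ultimately show ?thesis by simp
qed

lemma avg_integral:
  fixes f :: "real \<Rightarrow> real"
  assumes "continuous_on {a..} f" "(f \<longlongrightarrow> L) at_top"
  shows "((\<lambda>N. integral {a..N} f / N) \<longlongrightarrow> L) at_top"
proof (rule lh_avg[OF _ assms(2)])
  show "\<forall>\<^sub>F x in at_top. ((\<lambda>N. integral {a..N} f) has_real_derivative f x) (at x)"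
    using eventually_gt_at_top[of a] by eventually_elim (rule deriv_integral_at[OF assms(1)])
qed

lemma trick:
  fixes f h e :: "real \<Rightarrow> real"
  assumes cont: "continuous_on {a..} f" and c: "c \<noteq> 0"
    and dh: "\<And>x. x > a \<Longrightarrow> DERIV h x :> e x - c * f x"
    and e0: "(e \<longlongrightarrow> 0) at_top" and h0: "((\<lambda>N. h N / N) \<longlongrightarrow> 0) at_top"
  shows "((\<lambda>N. integral {a..N} f / N) \<longlongrightarrow> 0) at_top"
proof -
  define H where "H N = h N + c * integral {a..N} f" for N
  have "((\<lambda>N. H N / N) \<longlongrightarrow> 0) at_top"
  proof (rule lh_avg[OF _ e0])
    show "\<forall>\<^sub>F x in at_top. (H has_real_derivative e x) (at x)"
      using eventually_gt_at_top[of a]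
    proof eventually_elim
      case (elim x)
      have "(H has_real_derivative (e x - c * f x) + c * f x) (at x)"
        unfolding H_def[abs_def]
        by (intro DERIV_add DERIV_cmult dh deriv_integral_at[OF cont] elim)
      then show ?case by simp
    qed
  qed
  then have "((\<lambda>N. (H N / N - h N / N) / c) \<longlongrightarrow> (0 - 0) / c) at_top"
    using c by (intro tendsto_intros h0)
  moreover have "(H N / N - h N / N) / c = integral {a..N} f / N" for N
    using c by (simp add: H_def add_divide_distrib)
  ultimately show ?thesis by simp
qed



lemma alg_r: fixes as bs t p :: real assumes "as \<noteq> 0" shows
 "as * t^2 + bs * (t * p) + (1 + bs^2/4) / as * p^2 = as * ((t + bs / (2*as) * p)^2 + (1/as * p)^2)"
  using assms by (simp add: power2_eq_square field_simps)

lemma alg_q: fixes as bs t p dt dp :: real assumes "as \<noteq> 0" shows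
 "as * (-2 * t * dt) + bs * (- (t * dp + dt * p)) + (1 + bs^2/4) / as * (-2 * p * dp) = -2 * as * ((t + bs / (2*as) * p) * (dt + bs / (2*as) * dp) + (1/as * p) * (1/as * dp))"
  using assms by (simp add: power2_eq_square field_simps)

lemma alg_k1: fixes as u du w dw q lam :: real shows
 "as*(u^2+w^2) * (du^2 - dw^2 + (q+lam)*(u^2-w^2)) = (as*(u^2+w^2)*(q+lam) - as*(du^2+dw^2))*(u^2-w^2) - (-2*as*(u*du+w*dw))*(u*du - w*dw)"
  by (simp add: power2_eq_square algebra_simps)

lemma alg_k2: fixes as u du w dw q lam :: real shows
 "as*(u^2+w^2) * (- 2 * du * dw + (q+lam)*(- 2 * u * w)) = (as*(u^2+w^2)*(q+lam) - as*(du^2+dw^2))*(- 2 * u * w) - (-2*as*(u*du+w*dw))*(- (u * dw + w * du))"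
  by (simp add: power2_eq_square algebra_simps)

lemma alg_g: fixes as bs cs t p dt dp :: real shows
 "(as * dt^2 + bs * (dt * dp) + cs * dp^2) * (as * t^2 + bs * (t * p) + cs * p^2)
  - (as * (-2 * t * dt) + bs * (- (t * dp + dt * p)) + cs * (-2 * p * dp)) * (as * (-2 * t * dt) + bs * (- (t * dp + dt * p)) + cs * (-2 * p * dp)) / 4
  = (as*cs - bs^2/4) * (p * dt - dp * t)^2"
  by (simp add: power2_eq_square field_simps)

theorem mainTheorem10:
  fixes q0 q1 :: real and qs :: "nat \<Rightarrow> real" and q :: "real \<Rightarrow> real"
    and lam :: real
    and phi dphi theta dtheta :: "real \<Rightarrow> real"
    and a :: "nat \<Rightarrow> real" and y2 :: "real \<Rightarrow> real" and b :: "nat \<Rightarrow> real"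
    and b0 cl C :: real
    and P Q R :: "real \<Rightarrow> real" and as bs cs :: real
    and x0 :: real
  assumes q_def: "q = series_potential q0 q1 qs"
    and q_conv: "\<And>x. x > 0 \<Longrightarrow> summable (\<lambda>n. qs n * x ^ n)"
    and q0_ge: "q0 \<ge> -1/4"
    and q01: "q0 \<noteq> 0 \<or> q1 \<noteq> 0"
    and q_lim: "(q \<longlongrightarrow> 0) at_top"
    and q_int: "\<exists>x1>0. q absolutely_integrable_on {x1..}
                  \<or> (deriv q) absolutely_integrable_on {x1..}"
    and lam_pos: "lam > 0"
    \<comment> \<open>phi: Frobenius solution for the larger indicial root 1/2 + nu\<close>
    and phi_ser: "\<And>x. x > 0 \<Longrightarrow> summable (\<lambda>n. a (Suc n) * x ^ Suc n)"
    and phi_form: "\<And>x. x > 0 \<Longrightarrow>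
        phi x = x powr (1/2 + frob_nu q0) * (1 + (\<Sum>n. a (Suc n) * x ^ Suc n))"
    and phi_d: "\<And>x. x > 0 \<Longrightarrow> (phi has_real_derivative dphi x) (at x)"
    and phi_dd: "\<And>x. x > 0 \<Longrightarrow> (dphi has_real_derivative (q x - lam) * phi x) (at x)"
    \<comment> \<open>y2: second (possibly logarithmic) Frobenius solution, leading coefficient 1\<close>
    and y2_ser: "\<And>x. x > 0 \<Longrightarrow> summable (\<lambda>n. b (Suc n) * x ^ Suc n)"
    and y2_form: "\<And>x. x > 0 \<Longrightarrow>
        y2 x = x powr (1/2 - frob_nu q0) * (b0 + (\<Sum>n. b (Suc n) * x ^ Suc n))
               + cl * phi x * ln x"
    and y2_lead: "(frob_nu q0 > 0 \<longrightarrow> b0 = 1) \<and> (frob_nu q0 = 0 \<longrightarrow> cl = 1)"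
    and y2_sol: "\<And>x. x > 0 \<Longrightarrow> (y2 has_real_derivative C * dtheta x) (at x)"
    and C_nz: "C \<noteq> 0"
    and C_wr: "\<And>x. x > 0 \<Longrightarrow> phi x * (C * dtheta x) - dphi x * y2 x = C"
    and theta_def: "\<And>x. x > 0 \<Longrightarrow> theta x = y2 x / C"
    and theta_d: "\<And>x. x > 0 \<Longrightarrow> (theta has_real_derivative dtheta x) (at x)"
    and theta_dd: "\<And>x. x > 0 \<Longrightarrow> (dtheta has_real_derivative (q x - lam) * theta x) (at x)"
    \<comment> \<open>U_1 = (P,Q,R): solution of the Appell system with the prescribed limit at infinity\<close>
    and P_d: "\<And>x. x > 0 \<Longrightarrow> (P has_real_derivative (lam - q x) * Q x) (at x)"
    and Q_d: "\<And>x. x > 0 \<Longrightarrow>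
        (Q has_real_derivative (-2 * P x + 2 * (lam - q x) * R x)) (at x)"
    and R_d: "\<And>x. x > 0 \<Longrightarrow> (R has_real_derivative - Q x) (at x)"
    and P_lim: "(P \<longlongrightarrow> sqrt lam) at_top"
    and Q_lim: "(Q \<longlongrightarrow> 0) at_top"
    and R_lim: "(R \<longlongrightarrow> 1 / sqrt lam) at_top"
    and P_comb: "\<And>x. x > 0 \<Longrightarrow>
        P x = as * (dtheta x)\<^sup>2 + bs * (dtheta x * dphi x) + cs * (dphi x)\<^sup>2"
    and Q_comb: "\<And>x. x > 0 \<Longrightarrow>
        Q x = as * (-2 * theta x * dtheta x)
              + bs * (- (theta x * dphi x + dtheta x * phi x))
              + cs * (-2 * phi x * dphi x)"
    and R_comb: "\<And>x. x > 0 \<Longrightarrow>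
        R x = as * (theta x)\<^sup>2 + bs * (theta x * phi x) + cs * (phi x)\<^sup>2"
    and x0_pos: "x0 > 0"
  shows "let xi = complex_of_real (- bs / (2 * as)) + \<i> / complex_of_real as;
             psi = (\<lambda>x. complex_of_real (theta x) - xi * complex_of_real (phi x))
         in ((\<lambda>N. integral {x0..N} (\<lambda>x. (psi x)\<^sup>2)
                   / complex_of_real (integral {x0..N} (\<lambda>x. (cmod (psi x))\<^sup>2)))
             \<longlongrightarrow> 0) at_top"
  proof -
  define sl where "sl = sqrt lam"
  have sl: "sl > 0" "sl * sl = lam" using lam_pos by (auto simp: sl_def)
  have W: "phi x * dtheta x - dphi x * theta x = 1" if x: "x > 0" for x
  proof -
    have "y2 x = C * theta x" using theta_def[OF x] C_nz by simp
    with C_wr[OF x] have "C * (phi x * dtheta x - dphi x * theta x) = C * 1"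
      by (simp add: algebra_simps)
    then show ?thesis using C_nz by simp
  qed
  define G where "G x = P x * R x - Q x * Q x / 4" for x
  have dG: "(G has_real_derivative 0) (at x)" if x: "x > 0" for x
    unfolding G_def[abs_def]
    by (rule derivative_eq_intros P_d[OF x] Q_d[OF x] R_d[OF x] refl | simp add: field_simps)+
  obtain K where K: "\<forall>x\<in>{0<..}. G x = K"
    using has_field_derivative_zero_constant[of "{0<..}" G]
    by (metis convex_real_interval(3) dG greaterThan_iff has_field_derivative_at_within)
  have "(G \<longlongrightarrow> sl * (1/sl) - 0 * 0 / 4) at_top"
    unfolding G_def[abs_def] using P_lim Q_lim R_lim by (intro tendsto_intros) (auto simp: sl_def)
  moreover have "(G \<longlongrightarrow> K) at_top"
  proof (rule tendsto_eventually)
    show "\<forall>\<^sub>F x in at_top. G x = K"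
      using eventually_gt_at_top[of 0] by eventually_elim (use K in auto)
  qed
  ultimately have "K = sl * (1/sl) - 0 * 0 / 4" using tendsto_unique[OF trivial_limit_at_top_linorder] by blast
  then have K1: "K = 1" using sl by simp
  have "G 1 = (as*cs - bs^2/4) * (phi 1 * dtheta 1 - dphi 1 * theta 1)^2"
    unfolding G_def P_comb[OF zero_less_one] Q_comb[OF zero_less_one] R_comb[OF zero_less_one]
    by (rule alg_g)
  then have det: "as * cs - bs^2/4 = 1" using K K1 W[of 1] by simp
  have as0: "as \<noteq> 0" using det by (auto simp: power2_eq_square) (smt (verit) zero_le_square)
  have cs_eq: "cs = (1 + bs^2/4) / as" using det as0 by (simp add: field_simps)
  define al where "al = bs / (2*as)"
  define be where "be = 1 / as"
  define u where "u x = theta x + al * phi x" for x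
  define du where "du x = dtheta x + al * dphi x" for x
  define w where "w x = be * phi x" for x
  define dw where "dw x = be * dphi x" for x
  have Rid: "R x = as * ((u x)^2 + (w x)^2)" if x: "x > 0" for x
    unfolding R_comb[OF x] u_def w_def al_def be_def cs_eq
    by (rule alg_r[OF as0])
  have Pid: "P x = as * ((du x)^2 + (dw x)^2)" if x: "x > 0" for x
    unfolding P_comb[OF x] du_def dw_def al_def be_def cs_eq
    by (rule alg_r[OF as0])
  have Qid: "Q x = -2 * as * (u x * du x + w x * dw x)" if x: "x > 0" for x
    unfolding Q_comb[OF x] u_def du_def w_def dw_def al_def be_def cs_eq
    by (rule alg_q[OF as0])
  have EVP: "\<forall>\<^sub>F x in at_top. x > 0 \<and> R x > 0"
  proof -
    have "\<forall>\<^sub>F x in at_top. R x > 0"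
      using order_tendstoD(1)[OF R_lim, of 0] lam_pos by simp
    then show ?thesis using eventually_gt_at_top[of 0] by eventually_elim auto
  qed
  have as_pos: "as > 0"
  proof -
    obtain N where N: "\<forall>x\<ge>N. x > 0 \<and> R x > 0" using EVP unfolding eventually_at_top_linorder by blast
    then have "R N > 0" "N > 0" by auto
    then have "as * ((u N)^2 + (w N)^2) > 0" using Rid by simp
    moreover have "(u N)^2 + (w N)^2 \<ge> 0" by simp
    ultimately show ?thesis by (auto simp: zero_less_mult_iff)
  qed
  have du_d: "(u has_real_derivative du x) (at x)" if x: "x > 0" for x
    unfolding u_def[abs_def] du_def
    by (auto intro!: derivative_eq_intros theta_d[OF x] phi_d[OF x])
  have ddu_d: "(du has_real_derivative (q x - lam) * u x) (at x)" if x: "x > 0" for x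
    unfolding du_def[abs_def] u_def
    by (rule derivative_eq_intros theta_dd[OF x] phi_dd[OF x] refl | simp add: algebra_simps)+
  have dw_d: "(w has_real_derivative dw x) (at x)" if x: "x > 0" for x
    unfolding w_def[abs_def] dw_def
    by (auto intro!: derivative_eq_intros phi_d[OF x])
  have ddw_d: "(dw has_real_derivative (q x - lam) * w x) (at x)" if x: "x > 0" for x
    unfolding dw_def[abs_def] w_def
    by (rule derivative_eq_intros phi_dd[OF x] refl | simp add: algebra_simps)+
  define f1 where "f1 x = (u x)^2 - (w x)^2" for x
  define h1 where "h1 x = u x * du x - w x * dw x" for x
  define e1 where "e1 x = (du x)^2 - (dw x)^2 + (q x + lam) * f1 x" for x
  define f2 where "f2 x = - 2 * u x * w x" for x
  define h2 where "h2 x = - (u x * dw x + w x * du x)" for x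
  define e2 where "e2 x = - 2 * du x * dw x + (q x + lam) * f2 x" for x
  have dh1: "(h1 has_real_derivative e1 x - (2*lam) * f1 x) (at x)" if x: "x > a" "a \<ge> 0" for x a
  proof -
    have x: "x > 0" using x by simp
    show ?thesis unfolding h1_def[abs_def]
      by (rule derivative_eq_intros du_d[OF x] ddu_d[OF x] dw_d[OF x] ddw_d[OF x] refl
          | simp add: e1_def f1_def algebra_simps power2_eq_square)+
  qed
  have dh2: "(h2 has_real_derivative e2 x - (2*lam) * f2 x) (at x)" if x: "x > a" "a \<ge> 0" for x a
  proof -
    have x: "x > 0" using x by simp
    show ?thesis unfolding h2_def[abs_def]
      by (rule derivative_eq_intros du_d[OF x] ddu_d[OF x] dw_d[OF x] ddw_d[OF x] refl
          | simp add: e2_def f2_def algebra_simps power2_eq_square)+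
  qed
  have contu: "isCont u x" "isCont w x" if "x > 0" for x
    using du_d dw_d that by (auto intro: DERIV_isCont)
  have cf1: "continuous_on {x0..} f1" and cf2: "continuous_on {x0..} f2"
    and cf3: "continuous_on {x0..} (\<lambda>x. (u x)^2 + (w x)^2)"
    using x0_pos contu unfolding f1_def[abs_def] f2_def[abs_def]
    by (auto intro!: continuous_at_imp_continuous_on continuous_intros)
  have ineqs: "\<bar>a*b - c*d\<bar> \<le> (a^2+b^2+c^2+d^2)/2" "\<bar>a*b + c*d\<bar> \<le> (a^2+b^2+c^2+d^2)/2"
      "\<bar>a^2 - c^2\<bar> \<le> a^2 + c^2" "\<bar>2*a*c\<bar> \<le> a^2 + c^2" for a b c d :: real
  proof -
    have "0 \<le> (a-b)^2" "0 \<le> (a+b)^2" "0 \<le> (c-d)^2" "0 \<le> (c+d)^2" "0 \<le> (a-c)^2" "0 \<le> (a+c)^2"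
      "0 \<le> a^2" "0 \<le> c^2" by simp_all
    then show "\<bar>a*b - c*d\<bar> \<le> (a^2+b^2+c^2+d^2)/2" "\<bar>a*b + c*d\<bar> \<le> (a^2+b^2+c^2+d^2)/2"
      "\<bar>a^2 - c^2\<bar> \<le> a^2 + c^2" "\<bar>2*a*c\<bar> \<le> a^2 + c^2"
      unfolding power2_diff power2_sum abs_le_iff by (auto simp: algebra_simps)
  qed
  have bnd_h1: "\<bar>h1 x\<bar> \<le> (R x + P x) / (2*as)" and bnd_h2: "\<bar>h2 x\<bar> \<le> (R x + P x) / (2*as)"
    and bnd_f1: "\<bar>f1 x\<bar> \<le> R x / as" and bnd_f2: "\<bar>f2 x\<bar> \<le> R x / as"
    if x: "x > 0" for x
  proof -
    have "\<bar>h1 x\<bar> \<le> ((u x)^2 + (du x)^2 + (w x)^2 + (dw x)^2)/2"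
      unfolding h1_def by (rule ineqs(1))
    also have "\<dots> = (R x + P x) / (2*as)" using Rid[OF x] Pid[OF x] as0 by (simp add: field_simps)
    finally show "\<bar>h1 x\<bar> \<le> (R x + P x) / (2*as)" .
    have "\<bar>h2 x\<bar> \<le> ((u x)^2 + (dw x)^2 + (w x)^2 + (du x)^2)/2"
      unfolding h2_def abs_minus_cancel by (rule ineqs(2))
    also have "\<dots> = (R x + P x) / (2*as)" using Rid[OF x] Pid[OF x] as0 by (simp add: field_simps)
    finally show "\<bar>h2 x\<bar> \<le> (R x + P x) / (2*as)" .
    have "\<bar>f1 x\<bar> \<le> (u x)^2 + (w x)^2" unfolding f1_def by (rule ineqs(3))
    also have "\<dots> = R x / as" using Rid[OF x] as0 by (simp add: field_simps)
    finally show "\<bar>f1 x\<bar> \<le> R x / as" .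
    have "\<bar>f2 x\<bar> \<le> (u x)^2 + (w x)^2" unfolding f2_def abs_minus_cancel mult_minus_left
      by (rule ineqs(4))
    also have "\<dots> = R x / as" using Rid[OF x] as0 by (simp add: field_simps)
    finally show "\<bar>f2 x\<bar> \<le> R x / as" .
  qed
  have key1: "R x * e1 x = (R x * (q x + lam) - P x) * f1 x - Q x * h1 x" if x: "x > 0" for x
    unfolding Rid[OF x] Pid[OF x] Qid[OF x] e1_def f1_def h1_def by (rule alg_k1)
  have key2: "R x * e2 x = (R x * (q x + lam) - P x) * f2 x - Q x * h2 x" if x: "x > 0" for x
    unfolding Rid[OF x] Pid[OF x] Qid[OF x] e2_def f2_def h2_def by (rule alg_k2)
  define B where "B x = (\<bar>R x * (q x + lam) - P x\<bar> * (R x / as) + \<bar>Q x\<bar> * ((R x + P x) / (2*as))) / R x" for x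
  have B0: "(B \<longlongrightarrow> 0) at_top"
  proof -
    have "(B \<longlongrightarrow> (\<bar>1/sl * (0 + lam) - sl\<bar> * ((1/sl) / as) + \<bar>0\<bar> * ((1/sl + sl) / (2*as))) / (1/sl)) at_top"
      unfolding B_def[abs_def] using P_lim Q_lim R_lim q_lim sl as0
      by (intro tendsto_intros) (auto simp: sl_def)
    moreover have "1/sl * (0 + lam) - sl = 0" using sl by (simp add: field_simps)
    ultimately show ?thesis using sl by simp
  qed
  have bndE: "\<bar>e\<bar> \<le> B x" if x: "x > 0" "R x > 0" and k: "R x * e = (R x * (q x + lam) - P x) * f - Q x * h"
    and bf: "\<bar>f\<bar> \<le> R x / as" and bh: "\<bar>h\<bar> \<le> (R x + P x) / (2*as)" for x e f h
  proof -
    have "e = ((R x * (q x + lam) - P x) * f - Q x * h) / R x" using k x by (simp add: field_simps)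
    then have "\<bar>e\<bar> = \<bar>(R x * (q x + lam) - P x) * f - Q x * h\<bar> / R x" using x by simp
    also have "\<dots> \<le> B x"
    proof -
      have "\<bar>(R x * (q x + lam) - P x) * f - Q x * h\<bar>
          \<le> \<bar>R x * (q x + lam) - P x\<bar> * \<bar>f\<bar> + \<bar>Q x\<bar> * \<bar>h\<bar>"
        by (metis abs_mult abs_triangle_ineq4)
      also have "\<dots> \<le> \<bar>R x * (q x + lam) - P x\<bar> * (R x / as) + \<bar>Q x\<bar> * ((R x + P x) / (2*as))"
        by (intro add_mono mult_left_mono bf bh) auto
      finally show ?thesis unfolding B_def using x by (intro divide_right_mono) auto
    qed
    finally show ?thesis .
  qed
  have e10: "(e1 \<longlongrightarrow> 0) at_top"
    by (rule Lim_null_comparison[OF _ B0]) (use EVP in \<open>eventually_elim\<close>,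
        auto intro!: bndE key1 bnd_f1 bnd_h1)
  have e20: "(e2 \<longlongrightarrow> 0) at_top"
    by (rule Lim_null_comparison[OF _ B0]) (use EVP in \<open>eventually_elim\<close>,
        auto intro!: bndE key2 bnd_f2 bnd_h2)
  have RP: "((\<lambda>N. (R N + P N) / (2*as) / N) \<longlongrightarrow> 0) at_top"
  proof -
    have "((\<lambda>x. (R x + P x) / (2 * as)) \<longlongrightarrow> (1 / sqrt lam + sqrt lam) / (2 * as)) at_top"
      using as0 by (intro tendsto_intros R_lim P_lim) auto
    then show ?thesis
      by (rule tendsto_divide_0[OF _ filterlim_at_top_imp_at_infinity[OF filterlim_ident]])
  qed
  have h10: "((\<lambda>N. h1 N / N) \<longlongrightarrow> 0) at_top"
    by (rule Lim_null_comparison[OF _ RP]) (use eventually_gt_at_top[of 0] in \<open>eventually_elim\<close>,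
        metis abs_divide abs_of_pos divide_right_mono bnd_h1 less_imp_le real_norm_def)
  have h20: "((\<lambda>N. h2 N / N) \<longlongrightarrow> 0) at_top"
    by (rule Lim_null_comparison[OF _ RP]) (use eventually_gt_at_top[of 0] in \<open>eventually_elim\<close>,
        metis abs_divide abs_of_pos divide_right_mono bnd_h2 less_imp_le real_norm_def)
  have lam0: "2 * lam \<noteq> 0" using lam_pos by simp
  have I1: "((\<lambda>N. integral {x0..N} f1 / N) \<longlongrightarrow> 0) at_top"
    by (rule trick[OF cf1 lam0 _ e10 h10]) (rule dh1, use x0_pos in auto)
  have I2: "((\<lambda>N. integral {x0..N} f2 / N) \<longlongrightarrow> 0) at_top"
    by (rule trick[OF cf2 lam0 _ e20 h20]) (rule dh2, use x0_pos in auto)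
  define L where "L = 1 / sl / as"
  have L0: "L \<noteq> 0" using sl as0 by (simp add: L_def)
  have uwlim: "((\<lambda>x. (u x)^2 + (w x)^2) \<longlongrightarrow> L) at_top"
  proof -
    have "((\<lambda>x. R x / as) \<longlongrightarrow> L) at_top" unfolding L_def sl_def
      using R_lim as0 by (intro tendsto_intros)
    moreover have "\<forall>\<^sub>F x in at_top. R x / as = (u x)^2 + (w x)^2"
      using eventually_gt_at_top[of 0] by eventually_elim (use Rid as0 in simp)
    ultimately show ?thesis by (rule Lim_transform_eventually)
  qed
  have I3: "((\<lambda>N. integral {x0..N} (\<lambda>x. (u x)^2 + (w x)^2) / N) \<longlongrightarrow> L) at_top"
    by (rule avg_integral[OF cf3 uwlim])
  define xi where "xi = complex_of_real (- bs / (2 * as)) + \<i> / complex_of_real as"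
  define psi where "psi = (\<lambda>x. complex_of_real (theta x) - xi * complex_of_real (phi x))"
  have psi_eq: "psi x = Complex (u x) (- w x)" for x
    unfolding psi_def xi_def u_def w_def al_def be_def
    by (simp add: complex_eq_iff)
  have psi2: "(psi x)^2 = complex_of_real (f1 x) + \<i> * complex_of_real (f2 x)" for x
    unfolding psi_eq f1_def f2_def by (simp add: complex_eq_iff power2_eq_square)
  have psiabs: "(cmod (psi x))^2 = (u x)^2 + (w x)^2" for x
    unfolding psi_eq cmod_power2 by simp
  have int_eq: "integral {x0..N} (\<lambda>x. (psi x)\<^sup>2)
      = complex_of_real (integral {x0..N} f1) + \<i> * complex_of_real (integral {x0..N} f2)" for N
  proof -
    have "f1 integrable_on {x0..N}" "f2 integrable_on {x0..N}"
      using cf1 cf2 by (auto intro!: integrable_continuous_interval elim: continuous_on_subset)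
    then have "((\<lambda>x. (psi x)\<^sup>2) has_integral
        complex_of_real (integral {x0..N} f1) + \<i> * complex_of_real (integral {x0..N} f2)) {x0..N}"
      unfolding psi2
      by (intro has_integral_add has_integral_mult_right has_integral_of_real)
         (auto simp: has_integral_integral)
    then show ?thesis by blast
  qed
  have ratio: "integral {x0..N} (\<lambda>x. (psi x)\<^sup>2) / complex_of_real (integral {x0..N} (\<lambda>x. (cmod (psi x))\<^sup>2))
      = (complex_of_real (integral {x0..N} f1 / N) + \<i> * complex_of_real (integral {x0..N} f2 / N))
        / complex_of_real (integral {x0..N} (\<lambda>x. (u x)^2 + (w x)^2) / N)" if N: "N > 0" for N
    unfolding int_eq psiabs using N
    by (cases "integral {x0..N} (\<lambda>x. (u x)^2 + (w x)^2) = 0") (simp_all add: field_simps)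
  have "((\<lambda>N. (complex_of_real (integral {x0..N} f1 / N) + \<i> * complex_of_real (integral {x0..N} f2 / N))
        / complex_of_real (integral {x0..N} (\<lambda>x. (u x)^2 + (w x)^2) / N))
      \<longlongrightarrow> (complex_of_real 0 + \<i> * complex_of_real 0) / complex_of_real L) at_top"
    using L0 by (intro tendsto_intros I1 I2 I3) auto
  then have lim0: "((\<lambda>N. (complex_of_real (integral {x0..N} f1 / N) + \<i> * complex_of_real (integral {x0..N} f2 / N))
        / complex_of_real (integral {x0..N} (\<lambda>x. (u x)^2 + (w x)^2) / N)) \<longlongrightarrow> 0) at_top"
    by simp
  have "((\<lambda>N. integral {x0..N} (\<lambda>x. (psi x)\<^sup>2) / complex_of_real (integral {x0..N} (\<lambda>x. (cmod (psi x))\<^sup>2)))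
      \<longlongrightarrow> 0) at_top"
    by (rule Lim_transform_eventually[OF lim0])
       (use eventually_gt_at_top[of 0] in \<open>eventually_elim\<close>, rule ratio[symmetric])
  then show ?thesis unfolding Let_def xi_def[symmetric] psi_def by simp
qed

end
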